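(* Let $K$ be a finite simplicial complex, $N\subseteq K$ closed, and $\mathcal V_1,\mathcal V_2$ multivector fields on $K$ with $\mathcal V_2\sqsubseteq\mathcal V_1$. Let $M_1$ be an isolated invariant set under $\mathcal V_1$ isolated by $N$, and let $M_2$ be a minimal Morse set in $N$ under $\mathcal V_2$ (an isolated invariant set under $\mathcal V_2$, isolated by $N$, which is minimal). If $M_1\cap M_2\neq\emptyset$, then $M_2\subseteq M_1$.
   Context: $\sigma\le\tau$ means $\sigma$ is a face of $\tau$; $\mathrm{cl}(A)$ is the set of faces of simplices in $A$; $A$ is closed if $A=\mathrm{cl}(A)$. A multivector is a convex subset of $K$ w.r.t. $\le$; a multivector field $\mathcal V$ is a partition of $K$ into multivectors; $[\sigma]_{\mathcal V}$ is the multivector containing $\sigma$. $\mathcal V_2\sqsubseteq\mathcal V_1$ means each multivector of $\mathcal V_2$ is contained in one of $\mathcal V_1$. $F_{\mathcal V}(\sigma)=[\sigma]_{\mathcal V}\cup\mathrm{cl}(\sigma)$. A path is a finite sequence $\sigma_0,\dots,\sigma_m$ with $\sigma_j\in F_{\mathcal V}(\sigma_{j-1})$; a solution is a bi-infinite such sequence. A multivector $V$ is critical if $H_k(\mathrm{cl}(V),\mathrm{cl}(V)\setminus V)\neq0$ for some $k$ (coefficients in a finite field), regular otherwise. A solution $\rho:\mathbb Z\to K$ is essential if for each $i$ with $[\rho(i)]_{\mathcal V}$ regular there exist $i^-<i<i^+$ with $[\rho(i^-)]_{\mathcal V}\ne[\rho(i)]_{\mathcal V}\ne[\rho(i^+)]_{\mathcal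 V}$. $\mathrm{inv}_{\mathcal V}(A)$ is the set of $\sigma\in A$ that lie on some essential solution with image in $A$; $S$ is invariant if $\mathrm{inv}_{\mathcal V}(S)=S$. An invariant set $S$ is isolated by the closed set $N$ if $S$ is a union of multivectors of $\mathcal V$ and every path $\rho:\mathbb Z\cap[a,b]\to N$ with $\rho(a),\rho(b)\in S$ has image in $S$. A Morse decomposition of $S$ indexed by a finite poset $\mathbb P$ is a family $\{M_p\}$ of mutually disjoint isolated invariant subsets of $S$ such that every essential solution $\rho$ in $S$ either has image in a single $M_r$ or satisfies $\alpha(\rho)\subseteq M_q$, $\omega(\rho)\subseteq M_p$ with $q>p$ ($\alpha(\rho)=\bigcap_{i\ge1}\rho((-\infty,-i])$, $\omega(\rho)=\bigcap_{i\ge1}\rho([i,\infty))$). $S$ is minimal if its only Morse decomposition is $\{S\}$. *)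

theory Defs
  imports Main
begin

text \<open>Simplices are finite nonempty sets of vertices; vertices carry a linear order,
  used to orient simplices. The face relation is set inclusion.\<close>

definition simplicial_complex :: "'v set set \<Rightarrow> bool" where
  "simplicial_complex K \<longleftrightarrow> finite K \<and> (\<forall>\<sigma>\<in>K. finite \<sigma> \<and> \<sigma> \<noteq> {}) \<and>
     (\<forall>\<sigma>\<in>K. \<forall>\<tau>. \<tau> \<noteq> {} \<and> \<tau> \<subseteq> \<sigma> \<longrightarrow> \<tau> \<in> K)"

definition cl :: "'v set set \<Rightarrow> 'v set set" where
  "cl A = {\<tau>. \<tau> \<noteq> {} \<and> (\<exists>\<sigma>\<in>A. \<tau> \<subseteq> \<sigma>)}"

definition closed_set :: "'v set set \<Rightarrow> bool" where
  "closed_set A \<longleftrightarrow> A = cl A"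

definition multivector :: "'v set set \<Rightarrow> 'v set set \<Rightarrow> bool" where
  "multivector K V \<longleftrightarrow> V \<subseteq> K \<and>
     (\<forall>a\<in>V. \<forall>c\<in>V. \<forall>b\<in>K. a \<subseteq> b \<and> b \<subseteq> c \<longrightarrow> b \<in> V)"

definition multivector_field :: "'v set set \<Rightarrow> 'v set set set \<Rightarrow> bool" where
  "multivector_field K \<V> \<longleftrightarrow> (\<forall>V\<in>\<V>. V \<noteq> {} \<and> multivector K V) \<and>
     (\<forall>V\<in>\<V>. \<forall>W\<in>\<V>. V \<noteq> W \<longrightarrow> V \<inter> W = {}) \<and> \<Union>\<V> = K"

definition mv :: "'v set set set \<Rightarrow> 'v set \<Rightarrow> 'v set set" where
  "mv \<V> \<sigma> = (THE V. V \<in> \<V> \<and> \<sigma> \<in> V)"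

definition refines :: "'v set set set \<Rightarrow> 'v set set set \<Rightarrow> bool" where
  "refines \<V>2 \<V>1 \<longleftrightarrow> (\<forall>V\<in>\<V>2. \<exists>W\<in>\<V>1. V \<subseteq> W)"

definition Fmap :: "'v set set set \<Rightarrow> 'v set \<Rightarrow> 'v set set" where
  "Fmap \<V> \<sigma> = mv \<V> \<sigma> \<union> cl {\<sigma>}"

definition is_solution :: "'v set set set \<Rightarrow> (int \<Rightarrow> 'v set) \<Rightarrow> bool" where
  "is_solution \<V> \<rho> \<longleftrightarrow> (\<forall>i. \<rho> (i + 1) \<in> Fmap \<V> (\<rho> i))"

definition path_in :: "'v set set set \<Rightarrow> 'v set set \<Rightarrow> int \<Rightarrow> int \<Rightarrow> (int \<Rightarrow> 'v set) \<Rightarrow> bool" where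
  "path_in \<V> N a b \<rho> \<longleftrightarrow> a \<le> b \<and> (\<forall>i. a \<le> i \<and> i < b \<longrightarrow> \<rho> (i + 1) \<in> Fmap \<V> (\<rho> i)) \<and>
     (\<forall>i. a \<le> i \<and> i \<le> b \<longrightarrow> \<rho> i \<in> N)"

text \<open>Incidence number [\<sigma>:\<tau>] for the orientation given by the vertex order:
  (-1)^j where j is the position of the removed vertex in sorted \<sigma>.\<close>
definition incidence :: "'f::field itself \<Rightarrow> 'v::linorder set \<Rightarrow> 'v set \<Rightarrow> 'f" where
  "incidence F \<sigma> \<tau> = (if \<tau> \<subseteq> \<sigma> \<and> card \<sigma> = card \<tau> + 1
      then (-1) ^ card {w\<in>\<sigma>. w < the_elem (\<sigma> - \<tau>)} else 0)"

text \<open>Relative k-chains of (cl V, cl V - V): chains supported on k-simplices of V.\<close>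
definition rel_chains :: "'f::field itself \<Rightarrow> 'v::linorder set set \<Rightarrow> nat \<Rightarrow> ('v set \<Rightarrow> 'f) set" where
  "rel_chains F V k = {c. \<forall>\<sigma>. c \<sigma> \<noteq> 0 \<longrightarrow> \<sigma> \<in> V \<and> card \<sigma> = k + 1}"

definition rel_boundary :: "'f::field itself \<Rightarrow> 'v::linorder set set \<Rightarrow> ('v set \<Rightarrow> 'f) \<Rightarrow> ('v set \<Rightarrow> 'f)" where
  "rel_boundary F V c = (\<lambda>\<tau>. if \<tau> \<in> V then (\<Sum>\<sigma>\<in>V. incidence F \<sigma> \<tau> * c \<sigma>) else 0)"

definition rel_cycles :: "'f::field itself \<Rightarrow> 'v::linorder set set \<Rightarrow> nat \<Rightarrow> ('v set \<Rightarrow> 'f) set" where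
  "rel_cycles F V k = {c \<in> rel_chains F V k. rel_boundary F V c = (\<lambda>_. 0)}"

definition rel_boundaries :: "'f::field itself \<Rightarrow> 'v::linorder set set \<Rightarrow> nat \<Rightarrow> ('v set \<Rightarrow> 'f) set" where
  "rel_boundaries F V k = rel_boundary F V ` rel_chains F V (k + 1)"

text \<open>H_k(cl V, cl V - V; F) \<noteq> 0 iff the relative k-cycles differ from the relative k-boundaries.\<close>
definition critical :: "'f::{field,finite} itself \<Rightarrow> 'v::linorder set set \<Rightarrow> bool" where
  "critical F V \<longleftrightarrow> (\<exists>k. rel_cycles F V k \<noteq> rel_boundaries F V k)"

definition regular :: "'f::{field,finite} itself \<Rightarrow> 'v::linorder set set \<Rightarrow> bool" where
  "regular F V \<longleftrightarrow> \<not> critical F V"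

definition essential :: "'f::{field,finite} itself \<Rightarrow> 'v::linorder set set set \<Rightarrow> (int \<Rightarrow> 'v set) \<Rightarrow> bool" where
  "essential F \<V> \<rho> \<longleftrightarrow> is_solution \<V> \<rho> \<and>
     (\<forall>i. regular F (mv \<V> (\<rho> i)) \<longrightarrow>
        (\<exists>i1 i2. i1 < i \<and> i < i2 \<and> mv \<V> (\<rho> i1) \<noteq> mv \<V> (\<rho> i) \<and> mv \<V> (\<rho> i) \<noteq> mv \<V> (\<rho> i2)))"

definition inv :: "'f::{field,finite} itself \<Rightarrow> 'v::linorder set set set \<Rightarrow> 'v set set \<Rightarrow> 'v set set" where
  "inv F \<V> A = {\<sigma>\<in>A. \<exists>\<rho>. essential F \<V> \<rho> \<and> range \<rho> \<subseteq> A \<and> \<sigma> \<in> range \<rho>}"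

definition invariant :: "'f::{field,finite} itself \<Rightarrow> 'v::linorder set set set \<Rightarrow> 'v set set \<Rightarrow> bool" where
  "invariant F \<V> S \<longleftrightarrow> inv F \<V> S = S"

definition isolated_by :: "'f::{field,finite} itself \<Rightarrow> 'v::linorder set set set \<Rightarrow> 'v set set \<Rightarrow> 'v set set \<Rightarrow> bool" where
  "isolated_by F \<V> N S \<longleftrightarrow> invariant F \<V> S \<and> closed_set N \<and> S \<subseteq> N \<and>
     (\<forall>\<sigma>\<in>S. mv \<V> \<sigma> \<subseteq> S) \<and>
     (\<forall>\<rho> a b. path_in \<V> N a b \<rho> \<and> \<rho> a \<in> S \<and> \<rho> b \<in> S \<longrightarrow> (\<forall>i. a \<le> i \<and> i \<le> b \<longrightarrow> \<rho> i \<in> S))"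

definition isolated_invariant :: "'f::{field,finite} itself \<Rightarrow> 'v::linorder set set \<Rightarrow> 'v set set set \<Rightarrow> 'v set set \<Rightarrow> bool" where
  "isolated_invariant F K \<V> S \<longleftrightarrow> (\<exists>N. N \<subseteq> K \<and> isolated_by F \<V> N S)"

definition alpha_limit :: "(int \<Rightarrow> 'v set) \<Rightarrow> 'v set set" where
  "alpha_limit \<rho> = (\<Inter>i\<in>{1::int..}. \<rho> ` {..-i})"

definition omega_limit :: "(int \<Rightarrow> 'v set) \<Rightarrow> 'v set set" where
  "omega_limit \<rho> = (\<Inter>i\<in>{1::int..}. \<rho> ` {i..})"

definition morse_decomposition ::
  "'f::{field,finite} itself \<Rightarrow> 'v::linorder set set \<Rightarrow> 'v set set set \<Rightarrow> 'v set set
    \<Rightarrow> nat set \<Rightarrow> (nat \<Rightarrow> nat \<Rightarrow> bool) \<Rightarrow> (nat \<Rightarrow> 'v set set) \<Rightarrow> bool" where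
  "morse_decomposition F K \<V> S P le M \<longleftrightarrow>
     finite P \<and>
     (\<forall>p\<in>P. le p p) \<and> (\<forall>p\<in>P. \<forall>q\<in>P. le p q \<and> le q p \<longrightarrow> p = q) \<and>
     (\<forall>p\<in>P. \<forall>q\<in>P. \<forall>r\<in>P. le p q \<and> le q r \<longrightarrow> le p r) \<and>
     (\<forall>p\<in>P. M p \<subseteq> S \<and> isolated_invariant F K \<V> (M p)) \<and>
     (\<forall>p\<in>P. \<forall>q\<in>P. p \<noteq> q \<longrightarrow> M p \<inter> M q = {}) \<and>
     (\<forall>\<rho>. essential F \<V> \<rho> \<and> range \<rho> \<subseteq> S \<longrightarrow>
        (\<exists>r\<in>P. range \<rho> \<subseteq> M r) \<or>
        (\<exists>p\<in>P. \<exists>q\<in>P. le p q \<and> q \<noteq> p \<and> alpha_limit \<rho> \<subseteq> M q \<and> omega_limit \<rho> \<subseteq> M p))"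

definition minimal :: "'f::{field,finite} itself \<Rightarrow> 'v::linorder set set \<Rightarrow> 'v set set set \<Rightarrow> 'v set set \<Rightarrow> bool" where
  "minimal F K \<V> S \<longleftrightarrow>
     (\<forall>P le M. morse_decomposition F K \<V> S P le M \<longrightarrow> (\<forall>p\<in>P. M p = {} \<or> M p = S))"

end

theory Submission
  imports Defs
begin

lemma mv_prop:
  assumes "multivector_field K V" "\<sigma> \<in> K"
  shows "mv V \<sigma> \<in> V" "\<sigma> \<in> mv V \<sigma>"
proof -
  have ex: "\<exists>!W. W \<in> V \<and> \<sigma> \<in> W" using assms unfolding multivector_field_def by blast
  show "mv V \<sigma> \<in> V" "\<sigma> \<in> mv V \<sigma>" using theI'[OF ex] unfolding mv_def by auto
qed

lemma mv_unique:
  assumes "multivector_field K V" "W \<in> V" "\<sigma> \<in> W"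
  shows "mv V \<sigma> = W"
proof -
  have ex: "\<exists>!W. W \<in> V \<and> \<sigma> \<in> W" using assms unfolding multivector_field_def by blast
  show ?thesis unfolding mv_def using the1_equality[OF ex] assms by blast
qed

lemma mv_eq:
  assumes "multivector_field K V" "\<sigma> \<in> K" "\<tau> \<in> mv V \<sigma>"
  shows "mv V \<tau> = mv V \<sigma>"
  using mv_unique[OF assms(1) mv_prop(1)[OF assms(1,2)] assms(3)] .

lemma mv_ref:
  assumes "multivector_field K V1" "multivector_field K V2" "refines V2 V1" "\<sigma> \<in> K"
  shows "mv V2 \<sigma> \<subseteq> mv V1 \<sigma>"
proof -
  obtain W where W: "W \<in> V1" "mv V2 \<sigma> \<subseteq> W"
    using assms(3) mv_prop(1)[OF assms(2,4)] unfolding refines_def by blast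
  then have "\<sigma> \<in> W" using mv_prop(2)[OF assms(2,4)] by blast
  then have "mv V1 \<sigma> = W" using mv_unique[OF assms(1) W(1)] by blast
  then show ?thesis using W by simp
qed

lemma Fmap_ref:
  assumes "multivector_field K V1" "multivector_field K V2" "refines V2 V1" "\<sigma> \<in> K"
  shows "Fmap V2 \<sigma> \<subseteq> Fmap V1 \<sigma>"
  using mv_ref[OF assms] unfolding Fmap_def by blast

lemma shift_ess:
  assumes "essential F V r"
  shows "essential F V (\<lambda>t. r (t + (c::int)))"
proof -
  have sol: "is_solution V r" using assms unfolding essential_def by blast
  have "is_solution V (\<lambda>t. r (t + c))" unfolding is_solution_def
  proof
    fix i show "r (i + 1 + c) \<in> Fmap V (r (i + c))"
      using sol unfolding is_solution_def by (metis add.commute add.left_commute)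
  qed
  moreover have "\<exists>i1 i2. i1 < i \<and> i < i2 \<and> mv V (r (i1 + c)) \<noteq> mv V (r (i + c)) \<and> mv V (r (i + c)) \<noteq> mv V (r (i2 + c))"
    if reg: "regular F (mv V (r (i + c)))" for i
  proof -
    obtain i1 i2 where "i1 < i + c" "i + c < i2" "mv V (r i1) \<noteq> mv V (r (i + c))" "mv V (r (i + c)) \<noteq> mv V (r i2)"
    proof -
      have "\<forall>i. regular F (mv V (r i)) \<longrightarrow> (\<exists>i1 i2. i1 < i \<and> i < i2 \<and> mv V (r i1) \<noteq> mv V (r i) \<and> mv V (r i) \<noteq> mv V (r i2))"
        using assms unfolding essential_def by blast
      then show ?thesis using reg that by blast
    qed
    then show ?thesis by (intro exI[of _ "i1 - c"] exI[of _ "i2 - c"]) auto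
  qed
  ultimately show ?thesis unfolding essential_def by blast
qed

lemma splice:
  assumes e1: "essential F V r1" and e2: "essential F V r2" and n: "0 \<le> (n::int)"
    and g0: "g 0 = r1 0" and gn: "g n = r2 0"
    and gs: "\<forall>i. 0 \<le> i \<and> i < n \<longrightarrow> g (i+1) \<in> Fmap V (g i)"
  shows "\<exists>s. essential F V s \<and> range s \<subseteq> range r1 \<union> g ` {0..n} \<union> range r2 \<and> g ` {0..n} \<subseteq> range s"
proof -
  define s where "s t = (if t \<le> 0 then r1 t else if t \<le> n then g t else r2 (t - n))" for t
  have s1: "s t = r1 t" if "t \<le> 0" for t using that s_def by simp
  have s2: "s t = g t" if "0 \<le> t" "t \<le> n" for t using that s_def g0 by auto
  have s3: "s t = r2 (t - n)" if "n \<le> t" for t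
  proof (cases "t = n")
    case True
    then show ?thesis using s_def g0 gn n by auto
  next
    case False
    then show ?thesis using s_def that n by auto
  qed
  have sol1: "is_solution V r1" and sol2: "is_solution V r2" using e1 e2 unfolding essential_def by auto
  have sol: "is_solution V s" unfolding is_solution_def
  proof
    fix t
    consider "t < 0" | "0 \<le> t \<and> t < n" | "n \<le> t" by linarith
    then show "s (t + 1) \<in> Fmap V (s t)"
    proof cases
      case 1 then show ?thesis using s1[of t] s1[of "t+1"] sol1 unfolding is_solution_def by simp
    next
      case 2 then show ?thesis using s2[of t] s2[of "t+1"] gs by simp
    next
      case 3 then show ?thesis using s3[of t] s3[of "t+1"] sol2 unfolding is_solution_def
        by (metis add.commute add_diff_eq add_increasing2 zero_less_one_class.zero_le_one)
    qed
  qed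
  have ess: "\<exists>i1 i2. i1 < j \<and> j < i2 \<and> mv V (s i1) \<noteq> mv V (s j) \<and> mv V (s j) \<noteq> mv V (s i2)"
    if reg: "regular F (mv V (s j))" for j
  proof -
    have past: "\<exists>i1. i1 < j \<and> mv V (s i1) \<noteq> mv V (s j)"
    proof (cases "j \<le> 0")
      case True
      then obtain i1 where "i1 < j" "mv V (r1 i1) \<noteq> mv V (r1 j)"
        using e1 reg s1[OF True] unfolding essential_def by metis
      then show ?thesis using s1 True by (intro exI[of _ i1]) auto
    next
      case False
      show ?thesis
      proof (cases "mv V (s 0) = mv V (s j)")
        case True
        then have "regular F (mv V (r1 0))" using reg s1[of 0] by simp
        then obtain i1 where "i1 < 0" "mv V (r1 i1) \<noteq> mv V (r1 0)"
          using e1 unfolding essential_def by metis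
        then show ?thesis using s1[of i1] s1[of 0] True False by (intro exI[of _ i1]) auto
      next
        case F: False
        then show ?thesis using False by (intro exI[of _ 0]) auto
      qed
    qed
    have fut: "\<exists>i2. j < i2 \<and> mv V (s j) \<noteq> mv V (s i2)"
    proof (cases "n \<le> j")
      case True
      then obtain i2 where "j - n < i2" "mv V (r2 (j - n)) \<noteq> mv V (r2 i2)"
        using e2 reg s3[OF True] unfolding essential_def by metis
      moreover have "s (i2 + n) = r2 i2" using s3[of "i2 + n"] \<open>j - n < i2\<close> True by simp
      ultimately show ?thesis using s3[OF True] by (intro exI[of _ "i2 + n"]) auto
    next
      case False
      show ?thesis
      proof (cases "mv V (s n) = mv V (s j)")
        case True
        then have "regular F (mv V (r2 0))" using reg s3[of n] by simp
        then obtain i2 where "0 < i2" "mv V (r2 0) \<noteq> mv V (r2 i2)"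
          using e2 unfolding essential_def by metis
        then show ?thesis using s3[of "i2 + n"] s3[of n] True False by (intro exI[of _ "i2 + n"]) auto
      next
        case F: False
        then show ?thesis using False by (intro exI[of _ n]) auto
      qed
    qed
    show ?thesis using past fut by blast
  qed
  have "essential F V s" unfolding essential_def using sol ess by blast
  moreover have "range s \<subseteq> range r1 \<union> g ` {0..n} \<union> range r2"
  proof
    fix x assume "x \<in> range s"
    then obtain t where t: "x = s t" by blast
    consider "t \<le> 0" | "0 \<le> t \<and> t \<le> n" | "n \<le> t" by linarith
    then show "x \<in> range r1 \<union> g ` {0..n} \<union> range r2"
      using s1 s2 s3 t by cases auto
  qed
  moreover have "g ` {0..n} \<subseteq> range s"
  proof
    fix x assume "x \<in> g ` {0..n}"
    then obtain t where "t \<in> {0..n}" "x = g t" by blast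
    then show "x \<in> range s" using s2[of t] by (metis atLeastAtMost_iff rangeI)
  qed
  ultimately show ?thesis by blast
qed


lemma loop:
  assumes sol: "is_solution V r" and lt: "a < (b::int)" and eq: "r a = r b"
    and cond: "critical F (mv V (r a)) \<or> (\<exists>k. a < k \<and> k < b \<and> mv V (r k) \<noteq> mv V (r a))"
  shows "\<exists>s. essential F V s \<and> range s \<subseteq> r ` {a..b} \<and> r a \<in> range s"
proof -
  define p where "p = b - a"
  have p: "p > 0" using lt p_def by simp
  define s where "s t = r (a + t mod p)" for t
  have step: "s (t+1) = r (a + t mod p + 1)" for t
  proof (cases "t mod p + 1 < p")
    case True
    have "(t + 1) mod p = (t mod p + 1) mod p" by (simp add: mod_add_left_eq)
    also have "\<dots> = t mod p + 1" using True p by (simp add: mod_pos_pos_trivial)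
    finally show ?thesis unfolding s_def by (simp add: add.assoc)
  next
    case False
    have lt2: "t mod p < p" using p by simp
    then have tp: "t mod p + 1 = p" using False by simp
    have "(t + 1) mod p = (t mod p + 1) mod p" by (simp add: mod_add_left_eq)
    also have "\<dots> = 0" using tp by simp
    finally have "s (t+1) = r a" unfolding s_def by simp
    also have "\<dots> = r (a + p)" using eq p_def by simp
    finally show ?thesis using tp by (simp add: add.assoc)
  qed
  have sols: "is_solution V s" unfolding is_solution_def
  proof
    fix t show "s (t + 1) \<in> Fmap V (s t)"
      using step[of t] sol unfolding is_solution_def s_def by simp
  qed
  have ess: "\<exists>i1 i2. i1 < j \<and> j < i2 \<and> mv V (s i1) \<noteq> mv V (s j) \<and> mv V (s j) \<noteq> mv V (s i2)"
    if reg: "regular F (mv V (s j))" for j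
  proof -
    define W where "W = mv V (s j)"
    have "\<exists>k. 0 \<le> k \<and> k < p \<and> mv V (r (a + k)) \<noteq> W"
    proof (rule ccontr)
      assume "\<not> ?thesis"
      then have all: "\<forall>k. 0 \<le> k \<and> k < p \<longrightarrow> mv V (r (a + k)) = W" by blast
      then have ra: "mv V (r a) = W" using p by (metis add.right_neutral order_refl)
      show False using cond
      proof
        assume "critical F (mv V (r a))"
        then show False using reg ra W_def unfolding regular_def by simp
      next
        assume "\<exists>k. a < k \<and> k < b \<and> mv V (r k) \<noteq> mv V (r a)"
        then obtain k where "a < k" "k < b" "mv V (r k) \<noteq> mv V (r a)" by blast
        then show False using all[rule_format, of "k - a"] ra p_def by simp
      qed
    qed
    then obtain k where k: "0 \<le> k" "k < p" "mv V (r (a + k)) \<noteq> W" by blast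
    have md: "(p * m + k) mod p = k" for m using k by simp
    have sk: "s (p * m + k) = r (a + k)" for m unfolding s_def using md by simp
    have jd: "j = p * (j div p) + j mod p" by simp
    have jm: "0 \<le> j mod p" "j mod p < p" using p by auto
    have A: "p * (j div p) \<le> j" using jd jm by linarith
    have B: "j < p * (j div p) + p" using jd jm by linarith
    have C: "p * (j div p - 1) = p * (j div p) - p" by (simp add: right_diff_distrib)
    have D: "p * (j div p + 1) = p * (j div p) + p" by (simp add: distrib_left)
    show ?thesis
    proof (intro exI conjI)
      show "p * (j div p - 1) + k < j" using A C k by linarith
      show "j < p * (j div p + 1) + k" using B D k by linarith
      show "mv V (s (p * (j div p - 1) + k)) \<noteq> mv V (s j)" using sk k W_def by simp
      show "mv V (s j) \<noteq> mv V (s (p * (j div p + 1) + k))" using sk k W_def by metis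
    qed
  qed
  have "essential F V s" unfolding essential_def using sols ess by blast
  moreover have "range s \<subseteq> r ` {a..b}"
  proof
    fix x assume "x \<in> range s"
    then obtain t where "x = s t" by blast
    moreover have "0 \<le> t mod p" "t mod p < p" using p by auto
    ultimately show "x \<in> r ` {a..b}" unfolding s_def p_def by auto
  qed
  moreover have "r a \<in> range s" using s_def by (metis add.right_neutral mod_0 rangeI)
  ultimately show ?thesis by blast
qed

lemma omega_inv:
  assumes e: "essential F V r" and X: "\<forall>t\<ge>T. r t \<in> X"
  shows "omega_limit r \<subseteq> inv F V X"
proof
  fix \<tau> assume ta: "\<tau> \<in> omega_limit r"
  have occ: "\<exists>t\<ge>i. r t = \<tau>" if "i \<ge> 1" for i
  proof -
    have "i \<in> {1..}" using that by simp
    then have "\<tau> \<in> r ` {i..}" using ta unfolding omega_limit_def by blast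
    then show ?thesis by auto
  qed
  obtain s1 where s1: "s1 \<ge> T" "r s1 = \<tau>" using occ[of "max 1 T"] by auto
  have sol: "is_solution V r" using e unfolding essential_def by blast
  have "\<exists>s2>s1. r s2 = \<tau> \<and> (critical F (mv V (r s1)) \<or> (\<exists>k. s1 < k \<and> k < s2 \<and> mv V (r k) \<noteq> mv V (r s1)))"
  proof (cases "critical F (mv V (r s1))")
    case True
    obtain s2 where "s2 \<ge> max 1 (s1+1)" "r s2 = \<tau>" using occ[of "max 1 (s1+1)"] by auto
    then show ?thesis using True by (intro exI[of _ s2]) auto
  next
    case False
    then have "regular F (mv V (r s1))" unfolding regular_def by simp
    then obtain i2 where i2: "s1 < i2" "mv V (r s1) \<noteq> mv V (r i2)"
      using e unfolding essential_def by blast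
    obtain s2 where "s2 \<ge> max 1 (i2+1)" "r s2 = \<tau>" using occ[of "max 1 (i2+1)"] by auto
    then show ?thesis using i2 by (intro exI[of _ s2]) auto
  qed
  then obtain s2 where s2: "s1 < s2" "r s2 = \<tau>"
    "critical F (mv V (r s1)) \<or> (\<exists>k. s1 < k \<and> k < s2 \<and> mv V (r k) \<noteq> mv V (r s1))" by blast
  obtain s where s: "essential F V s" "range s \<subseteq> r ` {s1..s2}" "r s1 \<in> range s"
    using loop[OF sol s2(1) _ s2(3)] s1 s2 by auto
  have "range s \<subseteq> X" using s(2) X s1(1) by auto
  then show "\<tau> \<in> inv F V X" unfolding inv_def using s s1 by blast
qed

lemma alpha_inv:
  assumes e: "essential F V r" and X: "\<forall>t\<le>T. r t \<in> X"
  shows "alpha_limit r \<subseteq> inv F V X"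
proof
  fix \<tau> assume ta: "\<tau> \<in> alpha_limit r"
  have occ: "\<exists>t\<le>-i. r t = \<tau>" if "i \<ge> 1" for i
  proof -
    have "i \<in> {1..}" using that by simp
    then have "\<tau> \<in> r ` {..-i}" using ta unfolding alpha_limit_def by blast
    then show ?thesis by auto
  qed
  obtain s2 where s2: "s2 \<le> T" "r s2 = \<tau>"
  proof -
    obtain t where "t \<le> - max 1 (-T)" "r t = \<tau>" using occ[of "max 1 (-T)"] by auto
    then show ?thesis using that[of t] by linarith
  qed
  have sol: "is_solution V r" using e unfolding essential_def by blast
  have "\<exists>s1<s2. r s1 = \<tau> \<and> (critical F (mv V (r s1)) \<or> (\<exists>k. s1 < k \<and> k < s2 \<and> mv V (r k) \<noteq> mv V (r s1)))"
  proof (cases "critical F (mv V (r s2))")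
    case True
    obtain s1 where h: "s1 \<le> - max 1 (1 - s2)" "r s1 = \<tau>" using occ[of "max 1 (1 - s2)"] by auto
    have "s1 < s2" using h(1) by linarith
    moreover have "critical F (mv V (r s1))" using True h(2) s2(2) by simp
    ultimately show ?thesis using h(2) by blast
  next
    case False
    then have "regular F (mv V (r s2))" unfolding regular_def by simp
    then obtain i1 where i1: "i1 < s2" "mv V (r i1) \<noteq> mv V (r s2)"
      using e unfolding essential_def by blast
    obtain s1 where h: "s1 \<le> - max 1 (1 - i1)" "r s1 = \<tau>" using occ[of "max 1 (1 - i1)"] by auto
    have "s1 < i1" using h(1) by linarith
    moreover have "mv V (r i1) \<noteq> mv V (r s1)" using i1(2) h(2) s2(2) by simp
    ultimately show ?thesis using h(2) i1(1) by (metis order.strict_trans)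
  qed
  then obtain s1 where s1: "s1 < s2" "r s1 = \<tau>"
    "critical F (mv V (r s1)) \<or> (\<exists>k. s1 < k \<and> k < s2 \<and> mv V (r k) \<noteq> mv V (r s1))" by blast
  obtain s where s: "essential F V s" "range s \<subseteq> r ` {s1..s2}" "r s1 \<in> range s"
    using loop[OF sol s1(1) _ s1(3)] s1 s2 by auto
  have "range s \<subseteq> X" using s(2) X s2(1) by auto
  then show "\<tau> \<in> inv F V X" unfolding inv_def using s s1 by blast
qed

lemma inv_sub: "inv F V X \<subseteq> X" unfolding inv_def by blast

lemma inv_invariant: "invariant F V (inv F V X)"
proof -
  have "inv F V X \<subseteq> inv F V (inv F V X)"
  proof
    fix \<sigma> assume "\<sigma> \<in> inv F V X"
    then obtain \<rho> where r: "essential F V \<rho>" "range \<rho> \<subseteq> X" "\<sigma> \<in> range \<rho>" unfolding inv_def by blast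
    then have "range \<rho> \<subseteq> inv F V X" unfolding inv_def by blast
    then show "\<sigma> \<in> inv F V (inv F V X)" using r \<open>\<sigma> \<in> inv F V X\<close> unfolding inv_def by blast
  qed
  then show ?thesis unfolding invariant_def using inv_sub by blast
qed

lemma path_inv:
  assumes p: "path_in V N a b r" and ra: "r a \<in> inv F V X" and rb: "r b \<in> inv F V X"
    and allX: "\<forall>i. a \<le> i \<and> i \<le> b \<longrightarrow> r i \<in> X"
  shows "\<forall>i. a \<le> i \<and> i \<le> b \<longrightarrow> r i \<in> inv F V X"
proof -
  obtain r1 t1 where r1: "essential F V r1" "range r1 \<subseteq> X" "r a = r1 t1"
    using ra unfolding inv_def by blast
  obtain r2 t2 where r2: "essential F V r2" "range r2 \<subseteq> X" "r b = r2 t2"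
    using rb unfolding inv_def by blast
  define g where "g t = r (t + a)" for t
  have ab: "0 \<le> b - a" using p unfolding path_in_def by simp
  have gs: "\<forall>i. 0 \<le> i \<and> i < b - a \<longrightarrow> g (i+1) \<in> Fmap V (g i)"
  proof (intro allI impI)
    fix i assume "0 \<le> i \<and> i < b - a"
    then have "r (i + a + 1) \<in> Fmap V (r (i + a))" using p unfolding path_in_def by simp
    then show "g (i+1) \<in> Fmap V (g i)" unfolding g_def by (simp add: add.commute add.left_commute)
  qed
  have g0: "g 0 = (\<lambda>t. r1 (t + t1)) 0" using r1(3) unfolding g_def by simp
  have gn: "g (b - a) = (\<lambda>t. r2 (t + t2)) 0" using r2(3) unfolding g_def by simp
  have ex: "\<exists>s. essential F V s \<and> range s \<subseteq> range (\<lambda>t. r1 (t + t1)) \<union> g ` {0..b-a} \<union> range (\<lambda>t. r2 (t + t2)) \<and>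
     g ` {0..b-a} \<subseteq> range s"
    by (rule splice[OF shift_ess[OF r1(1), of t1] shift_ess[OF r2(1), of t2] ab g0 gn gs])
  obtain s where s0: "essential F V s \<and> range s \<subseteq> range (\<lambda>t. r1 (t + t1)) \<union> g ` {0..b-a} \<union> range (\<lambda>t. r2 (t + t2)) \<and>
     g ` {0..b-a} \<subseteq> range s" using ex by (rule exE)
  have s: "essential F V s" "range s \<subseteq> range (\<lambda>t. r1 (t + t1)) \<union> g ` {0..b-a} \<union> range (\<lambda>t. r2 (t + t2))"
     "g ` {0..b-a} \<subseteq> range s" using conjunct1[OF s0] conjunct1[OF conjunct2[OF s0]] conjunct2[OF conjunct2[OF s0]] by this+
  have rr1: "range (\<lambda>t. r1 (t + t1)) \<subseteq> X" using r1(2) by (simp add: image_subset_iff)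
  have rr2: "range (\<lambda>t. r2 (t + t2)) \<subseteq> X" using r2(2) by (simp add: image_subset_iff)
  have gX: "g ` {0..b-a} \<subseteq> X"
  proof
    fix x assume "x \<in> g ` {0..b-a}"
    then obtain t where t: "t \<in> {0..b-a}" "x = g t" by blast
    then have "a \<le> t + a \<and> t + a \<le> b" by simp
    then have "r (t + a) \<in> X" using allX by blast
    then show "x \<in> X" using t unfolding g_def by simp
  qed
  have "range (\<lambda>t. r1 (t + t1)) \<union> g ` {0..b-a} \<union> range (\<lambda>t. r2 (t + t2)) \<subseteq> X"
    using rr1 rr2 gX by (intro Un_least)
  then have sX: "range s \<subseteq> X" by (rule order_trans[OF s(2)])
  show ?thesis
  proof (intro allI impI)
    fix i assume i: "a \<le> i \<and> i \<le> b"
    then have "r i = g (i - a)" unfolding g_def by simp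
    moreover have "g (i - a) \<in> range s"
    proof -
      have "i - a \<in> {0..b-a}" using i by simp
      then have "g (i - a) \<in> g ` {0..b-a}" by (rule imageI)
      then show ?thesis using s(3) by blast
    qed
    ultimately have ri: "r i \<in> range s" by (simp only:)
    have "r i \<in> X" using allX i by blast
    then show "r i \<in> inv F V X" unfolding inv_def
      by (intro CollectI conjI exI[of _ s]) (use s(1) sX ri in auto)
  qed
qed

lemma iso_piece:
  assumes cN: "closed_set N" and XN: "X \<subseteq> N" and mf: "multivector_field K V" and NK: "N \<subseteq> K"
    and mvN: "\<forall>\<sigma>\<in>X. mv V \<sigma> \<subseteq> N"
    and conv: "\<forall>\<rho> a b. path_in V N a b \<rho> \<and> \<rho> a \<in> X \<and> \<rho> b \<in> X \<longrightarrow> (\<forall>i. a \<le> i \<and> i \<le> b \<longrightarrow> \<rho> i \<in> X)"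
  shows "isolated_by F V N (inv F V X)"
proof -
  have c2: "\<forall>i. a \<le> i \<and> i \<le> b \<longrightarrow> \<rho> i \<in> inv F V X"
    if "path_in V N a b \<rho>" "\<rho> a \<in> inv F V X" "\<rho> b \<in> inv F V X" for \<rho> a b
    using path_inv[OF that] conv that inv_sub by blast
  have mvs: "mv V \<sigma> \<subseteq> inv F V X" if s: "\<sigma> \<in> inv F V X" for \<sigma>
  proof
    fix \<tau> assume t: "\<tau> \<in> mv V \<sigma>"
    have sX: "\<sigma> \<in> X" using s inv_sub by blast
    have sK: "\<sigma> \<in> K" using sX XN NK by blast
    define \<rho> where "\<rho> i = (if i = (1::int) then \<tau> else \<sigma>)" for i
    have tN: "\<tau> \<in> N" using mvN sX t by blast
    have "\<tau> \<in> Fmap V \<sigma>" using t unfolding Fmap_def by blast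
    moreover have "\<sigma> \<in> Fmap V \<tau>" using mv_eq[OF mf sK t] mv_prop(2)[OF mf sK] unfolding Fmap_def by blast
    moreover have "i = 0 \<or> i = 1" if "0 \<le> i" "i < (2::int)" for i using that by linarith
    moreover have "i = 0 \<or> i = 1 \<or> i = 2" if "0 \<le> i" "i \<le> (2::int)" for i using that by linarith
    ultimately have "path_in V N 0 2 \<rho>" unfolding path_in_def
    proof (intro conjI allI impI)
      fix i :: int assume "0 \<le> i \<and> i < 2"
      then have "i = 0 \<or> i = 1" by linarith
      then show "\<rho> (i + 1) \<in> Fmap V (\<rho> i)"
        using \<open>\<tau> \<in> Fmap V \<sigma>\<close> \<open>\<sigma> \<in> Fmap V \<tau>\<close> unfolding \<rho>_def by auto
    next
      fix i :: int assume "0 \<le> i \<and> i \<le> 2"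
      then show "\<rho> i \<in> N" using tN sX XN unfolding \<rho>_def by auto
    qed simp
    then have "\<forall>i. 0 \<le> i \<and> i \<le> 2 \<longrightarrow> \<rho> i \<in> inv F V X" using c2[of 0 2 \<rho>] s unfolding \<rho>_def by auto
    then have "\<rho> 1 \<in> inv F V X" by simp
    then show "\<tau> \<in> inv F V X" unfolding \<rho>_def by simp
  qed
  show ?thesis unfolding isolated_by_def
    using inv_invariant cN inv_sub XN mvs c2 by blast
qed


definition stp :: "'v set set set \<Rightarrow> 'v set set \<Rightarrow> 'v set \<Rightarrow> 'v set \<Rightarrow> bool" where
  "stp V S x y \<longleftrightarrow> x \<in> S \<and> y \<in> S \<and> y \<in> Fmap V x"

lemma rt_in: "(stp V S)\<^sup>*\<^sup>* x y \<Longrightarrow> x \<in> S \<Longrightarrow> y \<in> S"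
  by (induction rule: rtranclp_induct) (auto simp: stp_def)

lemma rt_path:
  assumes "(stp V S)\<^sup>*\<^sup>* x y" "x \<in> S"
  shows "\<exists>r n. path_in V S 0 n r \<and> r 0 = x \<and> r n = y"
  using assms
proof (induction rule: rtranclp_induct)
  case base
  then show ?case by (intro exI[of _ "\<lambda>_. x"] exI[of _ 0]) (auto simp: path_in_def)
next
  case (step y z)
  then obtain r n where r: "path_in V S 0 n r" "r 0 = x" "r n = y" by blast
  define r' where "r' = r(n + 1 := z)"
  have n: "0 \<le> n" using r unfolding path_in_def by simp
  have "path_in V S 0 (n+1) r'" unfolding path_in_def
  proof (intro conjI allI impI)
    show "0 \<le> n + 1" using n by simp
  next
    fix i assume i: "0 \<le> i \<and> i < n + 1"
    show "r' (i + 1) \<in> Fmap V (r' i)"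
    proof (cases "i = n")
      case True then show ?thesis using step r unfolding r'_def stp_def by simp
    next
      case False then show ?thesis using r i unfolding r'_def path_in_def by simp
    qed
  next
    fix i assume i: "0 \<le> i \<and> i \<le> n + 1"
    show "r' i \<in> S"
    proof (cases "i = n + 1")
      case True then show ?thesis using step unfolding r'_def stp_def by simp
    next
      case False then show ?thesis using r i unfolding r'_def path_in_def by simp
    qed
  qed
  moreover have "r' 0 = x" using r n unfolding r'_def by simp
  moreover have "r' (n+1) = z" unfolding r'_def by simp
  ultimately show ?case by blast
qed

lemma iso_mid:
  assumes iso: "isolated_by F V N S" and xy: "(stp V N)\<^sup>*\<^sup>* x y" and yz: "(stp V N)\<^sup>*\<^sup>* y z"
    and x: "x \<in> S" and z: "z \<in> S"
  shows "y \<in> S"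
proof -
  have SN: "S \<subseteq> N" using iso unfolding isolated_by_def by blast
  obtain r1 n1 where r1: "path_in V N 0 n1 r1" "r1 0 = x" "r1 n1 = y" using rt_path[OF xy] x SN by blast
  have yN: "y \<in> N" using rt_in[OF xy] x SN by blast
  obtain r2 n2 where r2: "path_in V N 0 n2 r2" "r2 0 = y" "r2 n2 = z" using rt_path[OF yz yN] by blast
  define r where "r t = (if t \<le> n1 then r1 t else r2 (t - n1))" for t
  have n1: "0 \<le> n1" and n2: "0 \<le> n2" using r1 r2 unfolding path_in_def by auto
  have p: "path_in V N 0 (n1 + n2) r" unfolding path_in_def
  proof (intro conjI allI impI)
    show "0 \<le> n1 + n2" using n1 n2 by simp
  next
    fix i assume i: "0 \<le> i \<and> i < n1 + n2"
    consider "i < n1" | "i = n1" | "i > n1" by linarith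
    then show "r (i + 1) \<in> Fmap V (r i)"
    proof cases
      case 1 then show ?thesis using r1 i unfolding r_def path_in_def by simp
    next
      case 2 then show ?thesis using r1 r2 i n2 unfolding r_def path_in_def by auto
    next
      case 3
      then have "r2 (i - n1 + 1) \<in> Fmap V (r2 (i - n1))" using r2 i unfolding path_in_def by simp
      then show ?thesis using 3 unfolding r_def by (simp add: algebra_simps)
    qed
  next
    fix i assume i: "0 \<le> i \<and> i \<le> n1 + n2"
    then show "r i \<in> N" using r1 r2 unfolding r_def path_in_def by auto
  qed
  have "r 0 = x" "r (n1 + n2) = z" using r1 r2 n1 n2 unfolding r_def by auto
  then have "\<forall>i. 0 \<le> i \<and> i \<le> n1 + n2 \<longrightarrow> r i \<in> S" using iso p x z unfolding isolated_by_def by blast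
  then have "r n1 \<in> S" using n1 n2 by simp
  then show ?thesis using r1 unfolding r_def by simp
qed

lemma path_rt:
  assumes p: "path_in V S a b r" and ij: "a \<le> i" "i \<le> j" "j \<le> b"
  shows "(stp V S)\<^sup>*\<^sup>* (r i) (r j)"
  using ij(2,3)
proof (induction j rule: int_ge_induct)
  case base then show ?case by simp
next
  case (step k)
  then have "stp V S (r k) (r (k+1))" using p ij(1) unfolding path_in_def stp_def by simp
  moreover have "(stp V S)\<^sup>*\<^sup>* (r i) (r k)" using step by simp
  ultimately show ?case by (meson rtranclp.rtrancl_into_rtrancl)
qed

lemma sol_rt:
  assumes sol: "is_solution V r" and rs: "range r \<subseteq> S" and ij: "i \<le> j"
  shows "(stp V S)\<^sup>*\<^sup>* (r i) (r j)"
  using ij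
proof (induction j rule: int_ge_induct)
  case base then show ?case by simp
next
  case (step k)
  then have "stp V S (r k) (r (k+1))" using sol rs unfolding is_solution_def stp_def by auto
  then show ?case using step by (meson rtranclp.rtrancl_into_rtrancl)
qed

lemma range_inv: "essential F V \<rho> \<Longrightarrow> range \<rho> \<subseteq> X \<Longrightarrow> range \<rho> \<subseteq> inv F V X"
  unfolding inv_def by blast

lemma alpha_nonempty:
  assumes "range (r :: int \<Rightarrow> 'a set) \<subseteq> K" "finite K"
  shows "alpha_limit r \<noteq> {}"
proof -
  have inf: "infinite {..(0::int)}" by (rule infinite_Iic)
  have "r ` {..0} \<subseteq> K" using assms(1) by blast
  then have fin: "finite (r ` {..0})" using assms(2) by (rule finite_subset)
  obtain a0 where a0: "a0 \<in> {..0}" "infinite {a \<in> {..0}. r a = r a0}"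
    using pigeonhole_infinite[OF inf fin] by blast
  have "r a0 \<in> alpha_limit r" unfolding alpha_limit_def
  proof (rule INT_I)
    fix i :: int assume "i \<in> {1..}"
    show "r a0 \<in> r ` {..-i}"
    proof (rule ccontr)
      assume na: "r a0 \<notin> r ` {..-i}"
      have "{a \<in> {..0}. r a = r a0} \<subseteq> {-i<..0}"
      proof
        fix a assume a: "a \<in> {a \<in> {..0}. r a = r a0}"
        have "\<not> a \<le> -i"
        proof
          assume "a \<le> -i"
          then have "r a \<in> r ` {..-i}" by simp
          then show False using a na by simp
        qed
        then show "a \<in> {-i<..0}" using a by simp
      qed
      moreover have "finite {-i<..(0::int)}" by simp
      ultimately have "finite {a \<in> {..0}. r a = r a0}" by (rule finite_subset)
      then show False using a0(2) by contradiction
    qed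
  qed
  then show ?thesis by blast
qed


lemma iso_sub: "isolated_by F V N S \<Longrightarrow> S \<subseteq> N"
  unfolding isolated_by_def by (elim conjE)

lemma iso_mvs: "isolated_by F V N S \<Longrightarrow> \<forall>\<sigma>\<in>S. mv V \<sigma> \<subseteq> S"
  unfolding isolated_by_def by (elim conjE)

lemma iso_inv: "isolated_by F V N S \<Longrightarrow> inv F V S = S"
  unfolding isolated_by_def invariant_def by (elim conjE)

lemma iso_conv:
  assumes "isolated_by F V N S" "path_in V N a b \<rho>" "\<rho> a \<in> S" "\<rho> b \<in> S"
  shows "\<forall>i. a \<le> i \<and> i \<le> b \<longrightarrow> \<rho> i \<in> S"
proof -
  have "\<forall>\<rho> a b. path_in V N a b \<rho> \<and> \<rho> a \<in> S \<and> \<rho> b \<in> S \<longrightarrow> (\<forall>i. a \<le> i \<and> i \<le> b \<longrightarrow> \<rho> i \<in> S)"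
    using assms(1) unfolding isolated_by_def by (elim conjE)
  then show ?thesis using assms(2-4) by blast
qed

lemma morse_cond:
  assumes "morse_decomposition F K V S P le M" "essential F V \<rho>" "range \<rho> \<subseteq> S"
  shows "(\<exists>r\<in>P. range \<rho> \<subseteq> M r) \<or>
        (\<exists>p\<in>P. \<exists>q\<in>P. le p q \<and> q \<noteq> p \<and> alpha_limit \<rho> \<subseteq> M q \<and> omega_limit \<rho> \<subseteq> M p)"
proof -
  have "\<forall>\<rho>. essential F V \<rho> \<and> range \<rho> \<subseteq> S \<longrightarrow>
        (\<exists>r\<in>P. range \<rho> \<subseteq> M r) \<or>
        (\<exists>p\<in>P. \<exists>q\<in>P. le p q \<and> q \<noteq> p \<and> alpha_limit \<rho> \<subseteq> M q \<and> omega_limit \<rho> \<subseteq> M p)"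
    using assms(1) unfolding morse_decomposition_def by (elim conjE)
  then show ?thesis using assms(2,3) by blast
qed

lemma minimal_D:
  assumes "minimal F K V S" "morse_decomposition F K V S P le M" "p \<in> P"
  shows "M p = {} \<or> M p = S"
  using assms unfolding minimal_def by blast


theorem proposition20:
  fixes F :: "'f::{field,finite} itself"
    and K N M1 M2 :: "'v::linorder set set"
    and V1 V2 :: "'v set set set"
  assumes "simplicial_complex K"
    and "N \<subseteq> K" and "closed_set N"
    and "multivector_field K V1" and "multivector_field K V2"
    and "refines V2 V1"
    and "isolated_by F V1 N M1"
    and "isolated_by F V2 N M2" and "minimal F K V2 M2"
    and "M1 \<inter> M2 \<noteq> {}"
  shows "M2 \<subseteq> M1"
proof -
  note sc = assms(1) and NK = assms(2) and cN = assms(3) and mf1 = assms(4) and mf2 = assms(5)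
    and rf = assms(6) and iso1 = assms(7) and iso2 = assms(8) and mini = assms(9) and ne = assms(10)
  have finK: "finite K" using sc unfolding simplicial_complex_def by (elim conjE)
  have M2N: "M2 \<subseteq> N" by (rule iso_sub[OF iso2])
  have M2K: "M2 \<subseteq> K" using M2N NK by (rule order_trans)
  have mvM2: "\<forall>\<sigma>\<in>M2. mv V2 \<sigma> \<subseteq> M2" by (rule iso_mvs[OF iso2])
  have invM2: "inv F V2 M2 = M2" by (rule iso_inv[OF iso2])
  define A where "A = M1 \<inter> M2"
  define Rm where "Rm = {x \<in> M2. \<exists>a\<in>A. (stp V2 M2)\<^sup>*\<^sup>* x a}"
  define U where "U = Rm - A"
  define D where "D = M2 - Rm"
  have A_iff: "x \<in> A \<longleftrightarrow> x \<in> M1 \<and> x \<in> M2" for x by (simp add: A_def)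
  have Rm_iff: "x \<in> Rm \<longleftrightarrow> x \<in> M2 \<and> (\<exists>a\<in>A. (stp V2 M2)\<^sup>*\<^sup>* x a)" for x by (simp add: Rm_def)
  have U_iff: "x \<in> U \<longleftrightarrow> x \<in> Rm \<and> x \<notin> A" for x by (simp add: U_def)
  have D_iff: "x \<in> D \<longleftrightarrow> x \<in> M2 \<and> x \<notin> Rm" for x by (simp add: D_def)
  have ARm: "A \<subseteq> Rm"
  proof
    fix x assume x: "x \<in> A"
    then have "x \<in> M2" using A_iff by blast
    then show "x \<in> Rm" using x Rm_iff by blast
  qed
  have RmM2: "Rm \<subseteq> M2" using Rm_iff by blast
  have stle: "stp V2 M2 x y \<Longrightarrow> stp V1 N x y" for x y
  proof -
    assume h: "stp V2 M2 x y"
    then have "x \<in> K" using M2K unfolding stp_def by blast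
    then have "Fmap V2 x \<subseteq> Fmap V1 x" by (rule Fmap_ref[OF mf1 mf2 rf])
    then show "stp V1 N x y" using h M2N unfolding stp_def by blast
  qed
  have mono: "(stp V2 M2)\<^sup>*\<^sup>* x y \<Longrightarrow> (stp V1 N)\<^sup>*\<^sup>* x y" for x y
  proof -
    assume "(stp V2 M2)\<^sup>*\<^sup>* x y"
    then show "(stp V1 N)\<^sup>*\<^sup>* x y"
      by (induction rule: rtranclp_induct) (auto intro: rtranclp.rtrancl_into_rtrancl stle)
  qed
  have keyA: "y \<in> A" if "x \<in> A" "(stp V2 M2)\<^sup>*\<^sup>* x y" "(stp V2 M2)\<^sup>*\<^sup>* y z" "z \<in> A" for x y z
  proof -
    have "x \<in> M1" "z \<in> M1" "x \<in> M2" using that A_iff by auto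
    then have "y \<in> M1" using iso_mid[OF iso1 mono[OF that(2)] mono[OF that(3)]] by blast
    moreover have "y \<in> M2" using rt_in[OF that(2)] \<open>x \<in> M2\<close> by blast
    ultimately show ?thesis using A_iff by blast
  qed
  have pathM2: "(stp V2 M2)\<^sup>*\<^sup>* (r a) (r i) \<and> (stp V2 M2)\<^sup>*\<^sup>* (r i) (r b) \<and> r i \<in> M2"
    if p: "path_in V2 N a b r" "r a \<in> M2" "r b \<in> M2" "a \<le> i" "i \<le> b" for r a b i
  proof -
    have all: "\<forall>i. a \<le> i \<and> i \<le> b \<longrightarrow> r i \<in> M2" using iso_conv[OF iso2 p(1-3)] .
    have p2: "path_in V2 M2 a b r" using p(1) all unfolding path_in_def by blast
    have "(stp V2 M2)\<^sup>*\<^sup>* (r a) (r i)" using path_rt[OF p2, of a i] p by simp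
    moreover have "(stp V2 M2)\<^sup>*\<^sup>* (r i) (r b)" using path_rt[OF p2, of i b] p by simp
    moreover have "r i \<in> M2" using all p by blast
    ultimately show ?thesis by blast
  qed
  have convA: "\<forall>i. a \<le> i \<and> i \<le> b \<longrightarrow> r i \<in> A"
    if p: "path_in V2 N a b r" "r a \<in> A" "r b \<in> A" for r a b
  proof (intro allI impI)
    fix i assume i: "a \<le> i \<and> i \<le> b"
    have "r a \<in> M2" "r b \<in> M2" using p A_iff by auto
    then have h: "(stp V2 M2)\<^sup>*\<^sup>* (r a) (r i)" "(stp V2 M2)\<^sup>*\<^sup>* (r i) (r b)"
      using pathM2[OF p(1) _ _, of i] i by auto
    show "r i \<in> A" by (rule keyA[OF p(2) h p(3)])
  qed
  have convD: "\<forall>i. a \<le> i \<and> i \<le> b \<longrightarrow> r i \<in> D"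
    if p: "path_in V2 N a b r" "r a \<in> D" "r b \<in> D" for r a b
  proof (intro allI impI)
    fix i assume i: "a \<le> i \<and> i \<le> b"
    have "r a \<in> M2" "r b \<in> M2" using p D_iff by auto
    then have h: "(stp V2 M2)\<^sup>*\<^sup>* (r a) (r i)" "r i \<in> M2"
      using pathM2[OF p(1) _ _, of i] i by auto
    show "r i \<in> D"
    proof (rule ccontr)
      assume "r i \<notin> D"
      then have "r i \<in> Rm" using h(2) D_iff by blast
      then obtain z where z: "z \<in> A" "(stp V2 M2)\<^sup>*\<^sup>* (r i) z" using Rm_iff by blast
      have "(stp V2 M2)\<^sup>*\<^sup>* (r a) z" using rtranclp_trans[OF h(1) z(2)] .
      then have "r a \<in> Rm" using \<open>r a \<in> M2\<close> z(1) Rm_iff by blast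
      then show False using p(2) D_iff by blast
    qed
  qed
  have convU: "\<forall>i. a \<le> i \<and> i \<le> b \<longrightarrow> r i \<in> U"
    if p: "path_in V2 N a b r" "r a \<in> U" "r b \<in> U" for r a b
  proof (intro allI impI)
    fix i assume i: "a \<le> i \<and> i \<le> b"
    have "r a \<in> Rm" "r b \<in> Rm" using p U_iff by auto
    then have "r a \<in> M2" "r b \<in> M2" using RmM2 by auto
    then have h: "(stp V2 M2)\<^sup>*\<^sup>* (r i) (r b)" "r i \<in> M2"
      using pathM2[OF p(1) _ _, of i] i by auto
    obtain z where z: "z \<in> A" "(stp V2 M2)\<^sup>*\<^sup>* (r b) z" using \<open>r b \<in> Rm\<close> Rm_iff by blast
    have "(stp V2 M2)\<^sup>*\<^sup>* (r i) z" using rtranclp_trans[OF h(1) z(2)] .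
    then have "r i \<in> Rm" using h(2) z(1) Rm_iff by blast
    moreover have "r i \<notin> A"
    proof
      assume "r i \<in> A"
      then have "r b \<in> A" using keyA[OF _ h(1) z(2) z(1)] by blast
      then show False using p(3) U_iff by blast
    qed
    ultimately show "r i \<in> U" using U_iff by blast
  qed
  have isoX: "isolated_invariant F K V2 (inv F V2 X)"
    if XM2: "X \<subseteq> M2" and cv: "\<And>r a b. path_in V2 N a b r \<Longrightarrow> r a \<in> X \<Longrightarrow> r b \<in> X \<Longrightarrow> \<forall>i. a \<le> i \<and> i \<le> b \<longrightarrow> r i \<in> X" for X
  proof -
    have "isolated_by F V2 N (inv F V2 X)"
    proof (rule iso_piece[OF cN _ mf2 NK])
      show "X \<subseteq> N" using XM2 M2N by (rule order_trans)
      show "\<forall>\<sigma>\<in>X. mv V2 \<sigma> \<subseteq> N" using XM2 mvM2 M2N by blast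
      show "\<forall>\<rho> a b. path_in V2 N a b \<rho> \<and> \<rho> a \<in> X \<and> \<rho> b \<in> X \<longrightarrow> (\<forall>i. a \<le> i \<and> i \<le> b \<longrightarrow> \<rho> i \<in> X)"
      proof (rule allI, rule allI, rule allI, rule impI)
        fix \<rho> a b assume h: "path_in V2 N a b \<rho> \<and> \<rho> a \<in> X \<and> \<rho> b \<in> X"
        then show "\<forall>i. a \<le> i \<and> i \<le> b \<longrightarrow> \<rho> i \<in> X" using cv by blast
      qed
    qed
    then show ?thesis unfolding isolated_invariant_def using NK by blast
  qed
  have isoA: "isolated_invariant F K V2 (inv F V2 A)"
    by (rule isoX) (use A_iff convA in blast)+
  have isoU: "isolated_invariant F K V2 (inv F V2 U)"
    by (rule isoX) (use U_iff RmM2 convU in blast)+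
  have isoD: "isolated_invariant F K V2 (inv F V2 D)"
    by (rule isoX) (use D_iff convD in blast)+
  define Mf where "Mf p = (if p = (0::nat) then inv F V2 D else if p = 1 then inv F V2 A else inv F V2 U)" for p
  define P where "P = {0, 1, 2::nat}"
  have morse: "morse_decomposition F K V2 M2 P (\<le>) Mf"
  proof -
    have sub: "inv F V2 A \<subseteq> M2" "inv F V2 U \<subseteq> M2" "inv F V2 D \<subseteq> M2"
      using inv_sub[of F V2 A] inv_sub[of F V2 U] inv_sub[of F V2 D] A_iff U_iff D_iff RmM2 by blast+
    have c1: "\<forall>p\<in>P. Mf p \<subseteq> M2 \<and> isolated_invariant F K V2 (Mf p)"
    proof
      fix p assume "p \<in> P"
      then have "p = 0 \<or> p = 1 \<or> p = 2" unfolding P_def by simp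
      then show "Mf p \<subseteq> M2 \<and> isolated_invariant F K V2 (Mf p)"
        using sub isoA isoU isoD unfolding Mf_def by auto
    qed
    have dAU: "inv F V2 A \<inter> inv F V2 U = {}" using inv_sub[of F V2 A] inv_sub[of F V2 U] U_iff by blast
    have dAD: "inv F V2 A \<inter> inv F V2 D = {}" using inv_sub[of F V2 A] inv_sub[of F V2 D] D_iff ARm by blast
    have dUD: "inv F V2 U \<inter> inv F V2 D = {}" using inv_sub[of F V2 U] inv_sub[of F V2 D] D_iff U_iff by blast
    have c2: "\<forall>p\<in>P. \<forall>q\<in>P. p \<noteq> q \<longrightarrow> Mf p \<inter> Mf q = {}"
    proof (intro ballI impI)
      fix p q assume "p \<in> P" "q \<in> P" "p \<noteq> q"
      then have "(p = 0 \<or> p = 1 \<or> p = 2) \<and> (q = 0 \<or> q = 1 \<or> q = 2) \<and> p \<noteq> q" unfolding P_def by simp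
      then show "Mf p \<inter> Mf q = {}" using dAU dAD dUD unfolding Mf_def by (auto simp: Int_commute)
    qed
    have c3: "(\<exists>r\<in>P. range \<rho> \<subseteq> Mf r) \<or>
        (\<exists>p\<in>P. \<exists>q\<in>P. p \<le> q \<and> q \<noteq> p \<and> alpha_limit \<rho> \<subseteq> Mf q \<and> omega_limit \<rho> \<subseteq> Mf p)"
      if e: "essential F V2 \<rho>" and rs: "range \<rho> \<subseteq> M2" for \<rho>
    proof -
      have sol: "is_solution V2 \<rho>" using e unfolding essential_def by (elim conjE)
      have rt: "(stp V2 M2)\<^sup>*\<^sup>* (\<rho> s) (\<rho> t)" if "s \<le> t" for s t using sol_rt[OF sol rs that] .
      have inR: "\<rho> t \<in> M2" for t using rs by (simp add: image_subset_iff)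
      have Rdown: "\<rho> s \<in> Rm" if "\<rho> t \<in> Rm" "s \<le> t" for s t
      proof -
        have "\<exists>a\<in>A. (stp V2 M2)\<^sup>*\<^sup>* (\<rho> t) a" using that(1) unfolding Rm_iff by (elim conjE)
        then obtain z where z: "z \<in> A" "(stp V2 M2)\<^sup>*\<^sup>* (\<rho> t) z" by (rule bexE)
        have "(stp V2 M2)\<^sup>*\<^sup>* (\<rho> s) z" using rtranclp_trans[OF rt[OF that(2)] z(2)] .
        then show ?thesis using inR[of s] z(1) Rm_iff by blast
      qed
      have Aup: "\<rho> t \<in> A" if "\<rho> s \<in> A" "s \<le> t" "\<rho> t \<in> Rm" for s t
      proof -
        have "\<exists>a\<in>A. (stp V2 M2)\<^sup>*\<^sup>* (\<rho> t) a" using that(3) unfolding Rm_iff by (elim conjE)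
        then obtain z where "z \<in> A" "(stp V2 M2)\<^sup>*\<^sup>* (\<rho> t) z" by (rule bexE)
        then show ?thesis using keyA[OF that(1) rt[OF that(2)]] by blast
      qed
      have M0: "Mf 0 = inv F V2 D" and M1': "Mf 1 = inv F V2 A" and M2': "Mf 2 = inv F V2 U"
        unfolding Mf_def by simp_all
      have P0: "0 \<in> P" and P1: "1 \<in> P" and P2: "2 \<in> P" unfolding P_def by simp_all
      show ?thesis
      proof (cases "\<forall>t. \<rho> t \<notin> Rm")
        case True
        then have "range \<rho> \<subseteq> D" using inR D_iff by blast
        then have "range \<rho> \<subseteq> Mf 0" using range_inv[OF e] M0 by simp
        then show ?thesis using P0 by blast
      next
        case False
        then obtain t2 where t2: "\<rho> t2 \<in> Rm" by blast
        show ?thesis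
        proof (cases "\<exists>t1. \<rho> t1 \<notin> Rm")
          case True
          then obtain t1 where t1: "\<rho> t1 \<notin> Rm" by blast
          have "\<forall>t\<ge>t1. \<rho> t \<in> D"
          proof (intro allI impI)
            fix t assume "t1 \<le> t"
            then have "\<rho> t \<notin> Rm" using Rdown[of t t1] t1 by blast
            then show "\<rho> t \<in> D" using inR D_iff by blast
          qed
          then have om: "omega_limit \<rho> \<subseteq> Mf 0" using omega_inv[OF e] M0 by simp
          show ?thesis
          proof (cases "\<exists>t3\<le>t2. \<rho> t3 \<notin> A")
            case True
            then obtain t3 where t3: "t3 \<le> t2" "\<rho> t3 \<notin> A" by blast
            have r3: "\<rho> t3 \<in> Rm" using Rdown[OF t2 t3(1)] .
            have "\<forall>t\<le>t3. \<rho> t \<in> U"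
            proof (intro allI impI)
              fix t assume tt: "t \<le> t3"
              then have "\<rho> t \<in> Rm" using Rdown[OF t2, of t] t3(1) by simp
              moreover have "\<rho> t \<notin> A" using Aup[of t t3] tt t3(2) r3 by blast
              ultimately show "\<rho> t \<in> U" using U_iff by blast
            qed
            then have "alpha_limit \<rho> \<subseteq> Mf 2" using alpha_inv[OF e] M2' by simp
            then show ?thesis using om P0 P2 by fastforce
          next
            case False
            then have "\<forall>t\<le>t2. \<rho> t \<in> A" by blast
            then have "alpha_limit \<rho> \<subseteq> Mf 1" using alpha_inv[OF e] M1' by simp
            then show ?thesis using om P0 P1 by fastforce
          qed
        next
          case False
          then have allR: "\<forall>t. \<rho> t \<in> Rm" by blast
          show ?thesis
          proof (cases "\<forall>t. \<rho> t \<in> A")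
            case True
            then have "range \<rho> \<subseteq> A" by blast
            then have "range \<rho> \<subseteq> Mf 1" using range_inv[OF e] M1' by simp
            then show ?thesis using P1 by blast
          next
            case F2: False
            then obtain t0 where t0: "\<rho> t0 \<notin> A" by blast
            show ?thesis
            proof (cases "\<exists>s0. \<rho> s0 \<in> A")
              case True
              then obtain s0 where s0: "\<rho> s0 \<in> A" by blast
              have "\<forall>t\<ge>s0. \<rho> t \<in> A" using Aup[OF s0] allR by blast
              then have om: "omega_limit \<rho> \<subseteq> Mf 1" using omega_inv[OF e] M1' by simp
              have "\<forall>t\<le>t0. \<rho> t \<in> U"
              proof (intro allI impI)
                fix t assume tt: "t \<le> t0"
                have "\<rho> t \<notin> A" using Aup[of t t0] tt t0 allR by blast
                then show "\<rho> t \<in> U" using allR U_iff by blast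
              qed
              then have "alpha_limit \<rho> \<subseteq> Mf 2" using alpha_inv[OF e] M2' by simp
              then show ?thesis using om P1 P2 by fastforce
            next
              case False
              then have "range \<rho> \<subseteq> U" using allR U_iff by blast
              then have "range \<rho> \<subseteq> Mf 2" using range_inv[OF e] M2' by simp
              then show ?thesis using P2 by blast
            qed
          qed
        qed
      qed
    qed
    have fin: "finite P" unfolding P_def by simp
    show ?thesis unfolding morse_decomposition_def
    proof (intro conjI)
      show "finite P" by (rule fin)
      show "\<forall>p\<in>P. p \<le> p" by simp
      show "\<forall>p\<in>P. \<forall>q\<in>P. p \<le> q \<and> q \<le> p \<longrightarrow> p = q" by simp
      show "\<forall>p\<in>P. \<forall>q\<in>P. \<forall>r\<in>P. p \<le> q \<and> q \<le> r \<longrightarrow> p \<le> r" by simp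
      show "\<forall>p\<in>P. Mf p \<subseteq> M2 \<and> isolated_invariant F K V2 (Mf p)" by (rule c1)
      show "\<forall>p\<in>P. \<forall>q\<in>P. p \<noteq> q \<longrightarrow> Mf p \<inter> Mf q = {}" by (rule c2)
      show "\<forall>\<rho>. essential F V2 \<rho> \<and> range \<rho> \<subseteq> M2 \<longrightarrow>
        (\<exists>r\<in>P. range \<rho> \<subseteq> Mf r) \<or>
        (\<exists>p\<in>P. \<exists>q\<in>P. p \<le> q \<and> q \<noteq> p \<and> alpha_limit \<rho> \<subseteq> Mf q \<and> omega_limit \<rho> \<subseteq> Mf p)"
        using c3 by blast
    qed
  qed
  obtain \<sigma> where \<sigma>: "\<sigma> \<in> A" using ne A_iff by blast
  then have "\<sigma> \<in> inv F V2 M2" using invM2 A_iff by blast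
  then obtain \<rho> where \<rho>: "essential F V2 \<rho>" "range \<rho> \<subseteq> M2" "\<sigma> \<in> range \<rho>" unfolding inv_def by blast
  have "\<exists>r\<in>P. Mf r \<noteq> {}"
  proof -
    have "(\<exists>r\<in>P. range \<rho> \<subseteq> Mf r) \<or>
        (\<exists>p\<in>P. \<exists>q\<in>P. p \<le> q \<and> q \<noteq> p \<and> alpha_limit \<rho> \<subseteq> Mf q \<and> omega_limit \<rho> \<subseteq> Mf p)"
      by (rule morse_cond[OF morse \<rho>(1,2)])
    moreover have "alpha_limit \<rho> \<noteq> {}" using alpha_nonempty[OF _ finK] \<rho>(2) M2K by blast
    ultimately show ?thesis using \<rho>(3) by blast
  qed
  then obtain r where r: "r \<in> P" "Mf r \<noteq> {}" by blast
  then have eq: "Mf r = M2" using minimal_D[OF mini morse r(1)] by blast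
  have sM: "\<sigma> \<in> Mf r" using eq \<sigma> A_iff by blast
  have "r = 1"
  proof (rule ccontr)
    assume "r \<noteq> 1"
    then have "r = 0 \<or> r = 2" using r(1) unfolding P_def by auto
    then show False
    proof
      assume "r = 0"
      then have "\<sigma> \<in> inv F V2 D" using sM unfolding Mf_def by simp
      then have "\<sigma> \<in> D" using inv_sub by blast
      then show False using \<sigma> ARm D_iff by blast
    next
      assume "r = 2"
      then have "\<sigma> \<in> inv F V2 U" using sM unfolding Mf_def by simp
      then have "\<sigma> \<in> U" using inv_sub by blast
      then show False using \<sigma> U_iff by blast
    qed
  qed
  then have "M2 = inv F V2 A" using eq unfolding Mf_def by simp
  then have "M2 \<subseteq> A" using inv_sub by blast
  then show ?thesis using A_iff by blast
qed

end
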